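(* In the Mahi-Mahi protocol, if an honest validator commits some block $b$ in a leader slot $s$, then no other honest validator decides to directly skip the slot $s$.
   Context: Setting: $n=3f+1$ validators, at most $f$ Byzantine; honest validators create exactly one block per round, Byzantine ones may equivocate. Each valid block of round $r$ references (parents) at least $2f+1$ blocks of round $r-1$. Each validator has a local DAG of valid blocks, containing a block only with all its causal history. A block $b$ of round $r'$ is a vote for a block $L$ of round $r<r'$ with author $a$ if the first block with author $a$ and round $r$ met in the deterministic depth-first search from $b$ along parent references is $L$. With wave length $w\in\{4,5\}$, a block of round $r+w-1$ is a certificate for a block $L$ of round $r$ if at least $2f+1$ of its parents are votes for $L$. Leader slots of round $r$ are pairs (validator, $r$) chosen by a global common coin, identical for all validators, totally ordered. A validator classifies slots: direct skip if its local DAG has $2f+1$ blocks of round $r+w-2$ that are not votes for the block $L$ in the slot; direct commit of $L$ if it has $2f+1$ round-$(r+w-1)$ certificates for $L$; otherwise an indirect rule: with anchor the first non-skipped slot of round $>r+w-1$, if the anchor is committed with $A$, commit $L$ if there is a certificate $c$ for $L$ with a path from $A$ to $c$, else skip; if the anchor is undecided, the slot is undecided. (In particular, a slot is only committed with $L$ if the validator's DAG contains a certificate for $L$.) *)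

theory Defs
  imports Main "HOL-Library.Product_Lexorder"
begin

text \<open>Since references are (collision-free) hashes, we identify
a reference with the referenced block itself; two blocks with the same author and round but
different payload or parents are an equivocation.\<close>

datatype ('v, 'p) block =
  Block (author: 'v) (round: nat) (payload: 'p) (parents: "('v, 'p) block list")

fun first_some :: "'a option list \<Rightarrow> 'a option" where
  "first_some [] = None"
| "first_some (Some x # xs) = Some x"
| "first_some (None # xs) = first_some xs"

fun first_met :: "'v \<Rightarrow> nat \<Rightarrow> ('v, 'p) block \<Rightarrow> ('v, 'p) block option" where
  "first_met a r (Block v k p ps) =
     (if v = a \<and> k = r then Some (Block v k p ps)
      else first_some (map (first_met a r) ps))"

definition quorum :: "nat \<Rightarrow> ('v, 'p) block set \<Rightarrow> bool" where
  "quorum f S \<longleftrightarrow> 2 * f + 1 \<le> card (author ` S)"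

definition valid_block :: "'v set \<Rightarrow> nat \<Rightarrow> ('v, 'p) block \<Rightarrow> bool" where
  "valid_block V f b \<longleftrightarrow>
     author b \<in> V \<and>
     (round b = 0 \<longrightarrow> parents b = []) \<and>
     (0 < round b \<longrightarrow> (\<forall>p \<in> set (parents b). round p = round b - 1)
                      \<and> quorum f (set (parents b)))"

definition local_dag :: "'v set \<Rightarrow> nat \<Rightarrow> ('v, 'p) block set \<Rightarrow> bool" where
  "local_dag V f D \<longleftrightarrow> finite D \<and> (\<forall>b \<in> D. valid_block V f b \<and> set (parents b) \<subseteq> D)"

definition is_vote :: "('v, 'p) block \<Rightarrow> ('v, 'p) block \<Rightarrow> bool" where
  "is_vote b L \<longleftrightarrow> round L < round b \<and> first_met (author L) (round L) b = Some L"

definition is_cert :: "nat \<Rightarrow> nat \<Rightarrow> ('v, 'p) block \<Rightarrow> ('v, 'p) block \<Rightarrow> bool" where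
  "is_cert f w c L \<longleftrightarrow>
     round c = round L + w - 1 \<and> quorum f {p \<in> set (parents c). is_vote p L}"

definition reaches :: "('v, 'p) block \<Rightarrow> ('v, 'p) block \<Rightarrow> bool" where
  "reaches b c \<longleftrightarrow> (b, c) \<in> {(x, y). y \<in> set (parents x)}\<^sup>*"

text \<open>The global common coin yields, for every round r, the ordered list leaders r of
leader validators of round r.  A slot is a pair (r, i) with i < length (leaders r), denoting
the pair (leaders r ! i, r); slots are ordered lexicographically.\<close>

type_synonym slot = "nat \<times> nat"

definition slot_ok :: "(nat \<Rightarrow> 'v list) \<Rightarrow> slot \<Rightarrow> bool" where
  "slot_ok leaders s \<longleftrightarrow> snd s < length (leaders (fst s))"

definition in_slot :: "(nat \<Rightarrow> 'v list) \<Rightarrow> slot \<Rightarrow> ('v, 'p) block \<Rightarrow> bool" where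
  "in_slot leaders s L \<longleftrightarrow> author L = leaders (fst s) ! snd s \<and> round L = fst s"

definition direct_skip ::
  "nat \<Rightarrow> nat \<Rightarrow> (nat \<Rightarrow> 'v list) \<Rightarrow> ('v, 'p) block set \<Rightarrow> slot \<Rightarrow> bool" where
  "direct_skip f w leaders D s \<longleftrightarrow>
     (\<exists>S \<subseteq> D. quorum f S \<and>
        (\<forall>b \<in> S. round b = fst s + w - 2 \<and> (\<forall>L. in_slot leaders s L \<longrightarrow> \<not> is_vote b L)))"

definition direct_commit ::
  "nat \<Rightarrow> nat \<Rightarrow> (nat \<Rightarrow> 'v list) \<Rightarrow> ('v, 'p) block set \<Rightarrow> slot \<Rightarrow> ('v, 'p) block \<Rightarrow> bool" where
  "direct_commit f w leaders D s L \<longleftrightarrow>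
     in_slot leaders s L \<and> (\<exists>S \<subseteq> D. quorum f S \<and> (\<forall>c \<in> S. is_cert f w c L))"

definition indirect_commit ::
  "nat \<Rightarrow> nat \<Rightarrow> (nat \<Rightarrow> 'v list) \<Rightarrow> ('v, 'p) block set \<Rightarrow> slot \<Rightarrow> ('v, 'p) block
     \<Rightarrow> ('v, 'p) block \<Rightarrow> bool" where
  "indirect_commit f w leaders D s A L \<longleftrightarrow>
     in_slot leaders s L \<and> (\<exists>c \<in> D. is_cert f w c L \<and> reaches A c)"

datatype ('v, 'p) status = Commit "('v, 'p) block" | Skip | Undecided

text \<open>Decision with a recursion-depth bound n (the indirect rule looks at strictly later
slots).  With n large enough (see status below) the bound is irrelevant.\<close>

primrec decide ::
  "nat \<Rightarrow> nat \<Rightarrow> (nat \<Rightarrow> 'v list) \<Rightarrow> ('v, 'p) block set \<Rightarrow> nat \<Rightarrow> slot \<Rightarrow> ('v, 'p) status"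
where
  "decide f w leaders D 0 s =
     (if direct_skip f w leaders D s then Skip
      else if \<exists>L. direct_commit f w leaders D s L
        then Commit (SOME L. direct_commit f w leaders D s L)
      else Undecided)"
| "decide f w leaders D (Suc n) s =
     (if direct_skip f w leaders D s then Skip
      else if \<exists>L. direct_commit f w leaders D s L
        then Commit (SOME L. direct_commit f w leaders D s L)
      else
        (let Anc = {s'. fst s + w - 1 < fst s' \<and> slot_ok leaders s'
                         \<and> decide f w leaders D n s' \<noteq> Skip}
         in if Anc = {} then Undecided
            else (case decide f w leaders D n (LEAST s'. s' \<in> Anc) of
                    Commit A \<Rightarrow>
                      (if \<exists>L. indirect_commit f w leaders D s A L
                       then Commit (SOME L. indirect_commit f w leaders D s A L)
                       else Skip)
                  | _ \<Rightarrow> Undecided)))"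

text \<open>Slots beyond the
highest round of D are undecided, and each indirect step moves at least w rounds up, so a
recursion depth of (highest round of D) + 1 suffices.\<close>

definition status ::
  "nat \<Rightarrow> nat \<Rightarrow> (nat \<Rightarrow> 'v list) \<Rightarrow> ('v, 'p) block set \<Rightarrow> slot \<Rightarrow> ('v, 'p) status" where
  "status f w leaders D s = decide f w leaders D (Suc (Sup (round ` D))) s"

end

theory Submission
  imports Defs
begin

lemma direct_commit_cert:
  assumes "direct_commit f w leaders D s L"
  shows "\<exists>L c. in_slot leaders s L \<and> c \<in> D \<and> is_cert f w c L"
proof -
  from assms obtain S where S: "S \<subseteq> D" "quorum f S" "\<forall>c \<in> S. is_cert f w c L"
    and sl: "in_slot leaders s L" unfolding direct_commit_def by blast
  have "S \<noteq> {}" using S(2) unfolding quorum_def by (cases "S = {}") auto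
  then obtain c where "c \<in> S" by blast
  thus ?thesis using S sl by blast
qed

lemma decide_commit_cert:
  assumes "decide f w leaders D n s = Commit b"
  shows "\<exists>L c. in_slot leaders s L \<and> c \<in> D \<and> is_cert f w c L"
proof (cases "\<exists>L. direct_commit f w leaders D s L")
  case True
  then show ?thesis using direct_commit_cert by blast
next
  case False
  show ?thesis
  proof (cases n)
    case 0
    then show ?thesis using assms False by (auto split: if_splits)
  next
    case (Suc m)
    define Anc where "Anc = {s'. fst s + w - 1 < fst s' \<and> slot_ok leaders s'
                         \<and> decide f w leaders D m s' \<noteq> Skip}"
    have ns: "\<not> direct_skip f w leaders D s"
    proof
      assume "direct_skip f w leaders D s"
      then have "decide f w leaders D n s = Skip" using Suc by simp
      then show False using assms by simp
    qed
    have eq: "decide f w leaders D n s = (if Anc = {} then Undecided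
            else (case decide f w leaders D m (LEAST s'. s' \<in> Anc) of
                    Commit A \<Rightarrow>
                      (if \<exists>L. indirect_commit f w leaders D s A L
                       then Commit (SOME L. indirect_commit f w leaders D s A L)
                       else Skip)
                  | _ \<Rightarrow> Undecided))"
      using Suc ns False unfolding Anc_def by (simp only: decide.simps Let_def if_False)
    have "\<exists>A L. indirect_commit f w leaders D s A L"
    proof (cases "Anc = {}")
      case True then show ?thesis using eq assms by simp
    next
      case F2: False
      show ?thesis
      proof (cases "decide f w leaders D m (LEAST s'. s' \<in> Anc)")
        case (Commit A)
        then show ?thesis using eq assms F2 by (auto split: if_splits)
      next
        case Skip then show ?thesis using eq assms F2 by simp
      next
        case Undecided then show ?thesis using eq assms F2 by simp
      qed
    qed
    then show ?thesis unfolding indirect_commit_def by blast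
  qed
qed

lemma arith_aux:
  fixes x y a b c f :: nat
  shows "x \<le> k \<Longrightarrow> x + y = a + b \<Longrightarrow> 2 * f + 1 \<le> a \<Longrightarrow> 2 * f + 1 \<le> b
    \<Longrightarrow> k = 3 * f + 1 \<Longrightarrow> c \<le> f \<Longrightarrow> c < y"
  by linarith

theorem lemma3:
  fixes V Byz :: "'v set" and f w :: nat
    and leaders :: "nat \<Rightarrow> 'v list"
    and dag :: "'v \<Rightarrow> ('v, 'p) block set"
    and v1 v2 :: 'v and s :: slot and b :: "('v, 'p) block"
  assumes "finite V" and "card V = 3 * f + 1"
    and "Byz \<subseteq> V" and "card Byz \<le> f"
    and "w \<in> {4, 5}"
    and "\<forall>r. set (leaders r) \<subseteq> V"
    and "\<forall>x \<in> V - Byz. local_dag V f (dag x)"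
    and "\<forall>x \<in> V - Byz. \<forall>y \<in> V - Byz. \<forall>b1 \<in> dag x. \<forall>b2 \<in> dag y.
           author b1 \<in> V - Byz \<and> author b1 = author b2 \<and> round b1 = round b2 \<longrightarrow> b1 = b2"
    and "v1 \<in> V - Byz" and "v2 \<in> V - Byz"
    and "slot_ok leaders s"
    and "status f w leaders (dag v1) s = Commit b"
  shows "\<not> direct_skip f w leaders (dag v2) s"
proof
  assume ds: "direct_skip f w leaders (dag v2) s"
  then obtain S where S: "S \<subseteq> dag v2" "quorum f S"
    "\<forall>b \<in> S. round b = fst s + w - 2 \<and> (\<forall>L. in_slot leaders s L \<longrightarrow> \<not> is_vote b L)"
    unfolding direct_skip_def by blast
  obtain L c where Lc: "in_slot leaders s L" "c \<in> dag v1" "is_cert f w c L"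
    using decide_commit_cert assms(12) unfolding status_def by blast
  define P where "P = {p \<in> set (parents c). is_vote p L}"
  have qP: "quorum f P" using Lc(3) unfolding P_def is_cert_def by blast
  have ld1: "local_dag V f (dag v1)" and ld2: "local_dag V f (dag v2)" using assms(7,9,10) by auto
  have vc: "valid_block V f c" and pc: "set (parents c) \<subseteq> dag v1"
    using ld1 Lc(2) unfolding local_dag_def by auto
  have rc: "round c = fst s + w - 1" using Lc unfolding is_cert_def in_slot_def by auto
  have "0 < round c" using rc assms(5) by auto
  hence rP: "\<forall>p \<in> P. round p = fst s + w - 2" using vc rc unfolding valid_block_def P_def by auto
  have PD: "P \<subseteq> dag v1" using pc P_def by auto
  have aP: "author ` P \<subseteq> V" using PD ld1 unfolding local_dag_def valid_block_def by blast
  have aS: "author ` S \<subseteq> V" using S(1) ld2 unfolding local_dag_def valid_block_def by blast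
  have fin: "finite (author ` P)" "finite (author ` S)" using aP aS assms(1) finite_subset by auto
  have "card (author ` P \<union> author ` S) \<le> card V"
    using aP aS assms(1) by (intro card_mono) auto
  moreover have "card (author ` P \<union> author ` S) + card (author ` P \<inter> author ` S)
      = card (author ` P) + card (author ` S)" using card_Un_Int[OF fin] by simp
  moreover have "2 * f + 1 \<le> card (author ` P)" using qP unfolding quorum_def .
  moreover have "2 * f + 1 \<le> card (author ` S)" using S(2) unfolding quorum_def .
  ultimately have "card (author ` P \<inter> author ` S) > card Byz"
    using assms(2,4) by (metis arith_aux)
  hence "\<not> (author ` P \<inter> author ` S \<subseteq> Byz)"
    using assms(1,3) card_mono finite_subset by (metis leD)
  then obtain a where a: "a \<in> author ` P" "a \<in> author ` S" "a \<notin> Byz" by blast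
  from a(1) obtain p where p1: "p \<in> P" "author p = a" by (auto simp: image_iff)
  from a(2) obtain q where q1: "q \<in> S" "author q = a" by (auto simp: image_iff)
  have pq: "p \<in> P" "q \<in> S" "author p = a" "author q = a" using p1 q1 by simp_all
  have "a \<in> V" using a aP by auto
  have pD: "p \<in> dag v1" using PD pq(1) by (rule subsetD)
  have qD: "q \<in> dag v2" using S(1) pq(2) by (rule subsetD)
  have h1: "author p \<in> V - Byz" using pq(3) \<open>a \<in> V\<close> a(3) by simp
  have h2: "author p = author q" using pq(3,4) by simp
  have "round p = fst s + w - 2" using rP pq(1) by blast
  moreover have "round q = fst s + w - 2" using S(3) pq(2) by blast
  ultimately have h3: "round p = round q" by simp
  have "p = q" using bspec[OF bspec[OF bspec[OF bspec[OF assms(8) assms(9)] assms(10)] pD] qD] h1 h2 h3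
    by (rule mp[OF _ conjI[OF _ conjI]])
  moreover have "is_vote p L" using pq P_def by auto
  moreover have "\<not> is_vote q L" using S(3) pq Lc(1) by auto
  ultimately show False by simp
qed

end
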